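(* Let $R$ be a finite Frobenius ring, $M$ a finite $R$-bimodule, and $B$ a non-degenerate bilinear form on $M$. Then $$\mathrm{BLF}(M)=\{B\cdot\gamma:\gamma\in\operatorname{Aut}({}_RM)\}=\{B\cdot\eta:\eta\in\operatorname{Aut}(M_R)\}.$$
   Context: A bilinear form on $M$ is a map $B:M\times M\to R$ that is biadditive with $B(rx,y)=rB(x,y)$ and $B(x,yr)=B(x,y)r$ for $r\in R$, $x,y\in M$. It is non-degenerate if $B(x,y)=0$ for all $y$ implies $x=0$, and $B(x,y)=0$ for all $x$ implies $y=0$. $\mathrm{BLF}(M)$ is the set of non-degenerate bilinear forms on $M$. $\operatorname{Aut}({}_RM)$ (resp. $\operatorname{Aut}(M_R)$) is the group of left (resp. right) $R$-module automorphisms of $M$. For $\gamma\in\operatorname{Aut}({}_RM)$, $(B\cdot\gamma)(x,y)=B(\gamma(x),y)$; for $\eta\in\operatorname{Aut}(M_R)$, $(B\cdot\eta)(x,y)=B(x,\eta(y))$. *)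

theory Defs
  imports Main
begin

definition left_ideal :: "'r::ring_1 set \<Rightarrow> bool" where
  "left_ideal I \<longleftrightarrow> 0 \<in> I \<and> (\<forall>a\<in>I. \<forall>b\<in>I. a + b \<in> I) \<and> (\<forall>a\<in>I. - a \<in> I)
      \<and> (\<forall>r a. a \<in> I \<longrightarrow> r * a \<in> I)"

definition right_ideal :: "'r::ring_1 set \<Rightarrow> bool" where
  "right_ideal I \<longleftrightarrow> 0 \<in> I \<and> (\<forall>a\<in>I. \<forall>b\<in>I. a + b \<in> I) \<and> (\<forall>a\<in>I. - a \<in> I)
      \<and> (\<forall>r a. a \<in> I \<longrightarrow> a * r \<in> I)"

definition minimal_left_ideal :: "'r::ring_1 set \<Rightarrow> bool" where
  "minimal_left_ideal I \<longleftrightarrow> left_ideal I \<and> I \<noteq> {0}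
      \<and> (\<forall>K. left_ideal K \<and> K \<subseteq> I \<longrightarrow> K = {0} \<or> K = I)"

definition minimal_right_ideal :: "'r::ring_1 set \<Rightarrow> bool" where
  "minimal_right_ideal I \<longleftrightarrow> right_ideal I \<and> I \<noteq> {0}
      \<and> (\<forall>K. right_ideal K \<and> K \<subseteq> I \<longrightarrow> K = {0} \<or> K = I)"

definition maximal_left_ideal :: "'r::ring_1 set \<Rightarrow> bool" where
  "maximal_left_ideal I \<longleftrightarrow> left_ideal I \<and> I \<noteq> UNIV
      \<and> (\<forall>K. left_ideal K \<and> I \<subseteq> K \<longrightarrow> K = I \<or> K = UNIV)"

definition maximal_right_ideal :: "'r::ring_1 set \<Rightarrow> bool" where
  "maximal_right_ideal I \<longleftrightarrow> right_ideal I \<and> I \<noteq> UNIV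
      \<and> (\<forall>K. right_ideal K \<and> I \<subseteq> K \<longrightarrow> K = I \<or> K = UNIV)"

definition left_socle :: "'r::ring_1 set" where
  "left_socle = \<Inter> {K. left_ideal K \<and> (\<forall>I. minimal_left_ideal I \<longrightarrow> I \<subseteq> K)}"

definition right_socle :: "'r::ring_1 set" where
  "right_socle = \<Inter> {K. right_ideal K \<and> (\<forall>I. minimal_right_ideal I \<longrightarrow> I \<subseteq> K)}"

definition jacobson_left :: "'r::ring_1 set" where
  "jacobson_left = \<Inter> {I. maximal_left_ideal I}"

definition jacobson_right :: "'r::ring_1 set" where
  "jacobson_right = \<Inter> {I. maximal_right_ideal I}"

text \<open>R is Frobenius iff soc(_R R) \<cong> _R(R/J) and soc(R_R) \<cong> (R/J)_R. An isomorphism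
  R/J \<cong> S is encoded as a module epimorphism R \<rightarrow> S with kernel J.\<close>
definition frobenius_ring :: "'r::ring_1 itself \<Rightarrow> bool" where
  "frobenius_ring _ \<longleftrightarrow>
     (\<exists>f :: 'r \<Rightarrow> 'r. (\<forall>a b. f (a + b) = f a + f b) \<and> (\<forall>r a. f (r * a) = r * f a)
        \<and> range f = (left_socle :: 'r set) \<and> {a. f a = 0} = (jacobson_left :: 'r set)) \<and>
     (\<exists>f :: 'r \<Rightarrow> 'r. (\<forall>a b. f (a + b) = f a + f b) \<and> (\<forall>r a. f (a * r) = f a * r)
        \<and> range f = (right_socle :: 'r set) \<and> {a. f a = 0} = (jacobson_right :: 'r set))"

definition bimodule :: "('r::ring_1 \<Rightarrow> 'm::ab_group_add \<Rightarrow> 'm) \<Rightarrow> ('m \<Rightarrow> 'r \<Rightarrow> 'm) \<Rightarrow> bool" where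
  "bimodule lm rm \<longleftrightarrow>
     (\<forall>r x y. lm r (x + y) = lm r x + lm r y) \<and> (\<forall>r s x. lm (r + s) x = lm r x + lm s x)
   \<and> (\<forall>r s x. lm (r * s) x = lm r (lm s x)) \<and> (\<forall>x. lm 1 x = x)
   \<and> (\<forall>r x y. rm (x + y) r = rm x r + rm y r) \<and> (\<forall>r s x. rm x (r + s) = rm x r + rm x s)
   \<and> (\<forall>r s x. rm x (r * s) = rm (rm x r) s) \<and> (\<forall>x. rm x 1 = x)
   \<and> (\<forall>r s x. rm (lm r x) s = lm r (rm x s))"

definition bilinear_form ::
  "('r::ring_1 \<Rightarrow> 'm::ab_group_add \<Rightarrow> 'm) \<Rightarrow> ('m \<Rightarrow> 'r \<Rightarrow> 'm) \<Rightarrow> ('m \<Rightarrow> 'm \<Rightarrow> 'r) \<Rightarrow> bool" where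
  "bilinear_form lm rm B \<longleftrightarrow>
     (\<forall>x x' y. B (x + x') y = B x y + B x' y) \<and> (\<forall>x y y'. B x (y + y') = B x y + B x y')
   \<and> (\<forall>r x y. B (lm r x) y = r * B x y) \<and> (\<forall>r x y. B x (rm y r) = B x y * r)"

definition nondegenerate :: "('m::zero \<Rightarrow> 'm \<Rightarrow> 'r::zero) \<Rightarrow> bool" where
  "nondegenerate B \<longleftrightarrow> (\<forall>x. (\<forall>y. B x y = 0) \<longrightarrow> x = 0) \<and> (\<forall>y. (\<forall>x. B x y = 0) \<longrightarrow> y = 0)"

definition BLF ::
  "('r::ring_1 \<Rightarrow> 'm::ab_group_add \<Rightarrow> 'm) \<Rightarrow> ('m \<Rightarrow> 'r \<Rightarrow> 'm) \<Rightarrow> ('m \<Rightarrow> 'm \<Rightarrow> 'r) set" where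
  "BLF lm rm = {B. bilinear_form lm rm B \<and> nondegenerate B}"

definition Aut_left :: "('r::ring_1 \<Rightarrow> 'm::ab_group_add \<Rightarrow> 'm) \<Rightarrow> ('m \<Rightarrow> 'm) set" where
  "Aut_left lm = {g. bij g \<and> (\<forall>x y. g (x + y) = g x + g y) \<and> (\<forall>r x. g (lm r x) = lm r (g x))}"

definition Aut_right :: "('m::ab_group_add \<Rightarrow> 'r::ring_1 \<Rightarrow> 'm) \<Rightarrow> ('m \<Rightarrow> 'm) set" where
  "Aut_right rm = {g. bij g \<and> (\<forall>x y. g (x + y) = g x + g y) \<and> (\<forall>r x. g (rm x r) = rm (g x) r)}"

end

theory Submission
  imports Defs
begin

lemma card_fiber_bound:
  assumes "finite X" "finite Y" "f ` X \<subseteq> Y"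
    and "\<And>y. y \<in> Y \<Longrightarrow> card {x\<in>X. f x = y} \<le> k"
  shows "card X \<le> k * card Y"
proof -
  have "X = (\<Union>y\<in>Y. {x\<in>X. f x = y})" using assms(3) by auto
  hence "card X \<le> (\<Sum>y\<in>Y. card {x\<in>X. f x = y})"
    using card_UN_le[OF assms(2), of "\<lambda>y. {x\<in>X. f x = y}"] by simp
  also have "\<dots> \<le> card Y * k" using sum_bounded_above[of Y "\<lambda>y. card {x\<in>X. f x = y}" k] assms(4)
    by simp
  finally show ?thesis by (simp add: mult.commute)
qed

lemma card_fiber_inj:
  assumes "finite S" "\<And>x1. x1 \<in> F \<Longrightarrow> inj_on (h x1) F \<and> h x1 ` F \<subseteq> S"
  shows "card F \<le> card S"
proof (cases "F = {}")
  case True then show ?thesis by simp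
next
  case False
  then obtain x1 where "x1 \<in> F" by auto
  with assms show ?thesis using card_inj_on_le[of "h x1" F S] by auto
qed

lemma fiber_bound_diff:
  fixes F :: "'a \<Rightarrow> 'b" and g :: "'a \<Rightarrow> 'c::ab_group_add"
  assumes "finite X" "finite Y" "F ` X \<subseteq> Y" "finite S"
    and "\<And>p q. p \<in> X \<Longrightarrow> q \<in> X \<Longrightarrow> F p = F q \<Longrightarrow> g p - g q \<in> S"
    and "\<And>p q. p \<in> X \<Longrightarrow> q \<in> X \<Longrightarrow> F p = F q \<Longrightarrow> g p = g q \<Longrightarrow> p = q"
  shows "card X \<le> card S * card Y"
proof (rule card_fiber_bound[OF assms(1-3)])
  fix y
  show "card {x \<in> X. F x = y} \<le> card S"
  proof (rule card_fiber_inj[where h = "\<lambda>p1 p. g p - g p1"])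
    show "finite S" by fact
    fix p1 assume p1: "p1 \<in> {x \<in> X. F x = y}"
    show "inj_on (\<lambda>p. g p - g p1) {x \<in> X. F x = y} \<and> (\<lambda>p. g p - g p1) ` {x \<in> X. F x = y} \<subseteq> S"
    proof
      show "inj_on (\<lambda>p. g p - g p1) {x \<in> X. F x = y}"
        by (rule inj_onI) (use assms(6) in auto)
      show "(\<lambda>p. g p - g p1) ` {x \<in> X. F x = y} \<subseteq> S"
        using assms(5) p1 by auto
    qed
  qed
qed

lemma arith_combine:
  fixes a1 A0 m1 A1 tA tm m0 sA sm sA' :: nat
  assumes ii: "a1 * (A0 * m1) \<le> A1 * (tA * tm)"
    and ih: "tA * m0 \<le> sA * A0"
    and iii: "tm * m0 \<le> sm * m1"
    and iv: "sA * sm \<le> m0 * sA'"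
    and pos: "A0 > 0" "m1 > 0" "m0 > 0"
  shows "a1 * m0 \<le> sA' * A1"
proof -
  have "(a1 * m0) * (A0 * m1 * m0) = (a1 * (A0 * m1)) * (m0 * m0)" by (simp add: ac_simps)
  also have "\<dots> \<le> (A1 * (tA * tm)) * (m0 * m0)" using ii by (rule mult_right_mono) simp
  also have "\<dots> = A1 * ((tA * m0) * (tm * m0))" by (simp add: ac_simps)
  also have "\<dots> \<le> A1 * ((sA * A0) * (sm * m1))" by (rule mult_left_mono[OF mult_mono[OF ih iii]]) simp_all
  also have "\<dots> = (A1 * A0 * m1) * (sA * sm)" by (simp add: ac_simps)
  also have "\<dots> \<le> (A1 * A0 * m1) * (m0 * sA')" using iv by (rule mult_left_mono) simp
  also have "\<dots> = (sA' * A1) * (A0 * m1 * m0)" by (simp add: ac_simps)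
  finally show ?thesis using pos by simp
qed

locale xring =
  fixes mul :: "'r::{ab_group_add,finite} \<Rightarrow> 'r \<Rightarrow> 'r"
    and one :: 'r
  assumes assoc: "mul (mul a b) c = mul a (mul b c)"
    and distl: "mul a (b + c) = mul a b + mul a c"
    and distr: "mul (a + b) c = mul a c + mul b c"
    and onel: "mul one a = a" and oner: "mul a one = a"
begin

lemma mul0l[simp]: "mul 0 a = 0"
proof -
  have "mul 0 a + mul 0 a = mul 0 a + 0" using distr[of 0 0 a] by (simp only: add_0 add_0_right)
  thus ?thesis by (simp only: add_left_cancel)
qed
lemma mul0r[simp]: "mul a 0 = 0"
proof -
  have "mul a 0 + mul a 0 = mul a 0 + 0" using distl[of a 0 0] by (simp only: add_0 add_0_right)
  thus ?thesis by (simp only: add_left_cancel)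
qed
lemma minusl: "mul (- a) b = - mul a b"
proof -
  have "mul (- a) b + mul a b = 0" using distr[of "-a" a b] by simp
  thus ?thesis by (simp add: add_eq_0_iff2)
qed
lemma minusr: "mul a (- b) = - mul a b"
proof -
  have "mul a (- b) + mul a b = 0" using distl[of a "-b" b] by simp
  thus ?thesis by (simp add: add_eq_0_iff2)
qed
lemma diffl: "mul (a - b) c = mul a c - mul b c"
  by (simp only: diff_conv_add_uminus distr minusl)
lemma diffr: "mul a (b - c) = mul a b - mul a c"
  by (simp only: diff_conv_add_uminus distl minusr)

definition rid :: "'r set \<Rightarrow> bool" where
  "rid I \<longleftrightarrow> 0 \<in> I \<and> (\<forall>a\<in>I. \<forall>b\<in>I. a + b \<in> I) \<and> (\<forall>a\<in>I. - a \<in> I)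
      \<and> (\<forall>r a. a \<in> I \<longrightarrow> mul a r \<in> I)"

definition maxr :: "'r set \<Rightarrow> bool" where
  "maxr I \<longleftrightarrow> rid I \<and> I \<noteq> UNIV \<and> (\<forall>K. rid K \<and> I \<subseteq> K \<longrightarrow> K = I \<or> K = UNIV)"

definition minr :: "'r set \<Rightarrow> bool" where
  "minr I \<longleftrightarrow> rid I \<and> I \<noteq> {0} \<and> (\<forall>K. rid K \<and> K \<subseteq> I \<longrightarrow> K = {0} \<or> K = I)"

definition T :: "'r set \<Rightarrow> 'r set \<Rightarrow> 'r set" where
  "T A B = {x. \<forall>a\<in>A. mul x a \<in> B}"

definition lann :: "'r set \<Rightarrow> 'r set" where
  "lann S = {x. \<forall>r\<in>S. mul x r = 0}"

lemma rid_0: "rid I \<Longrightarrow> 0 \<in> I" by (simp add: rid_def)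
lemma rid_add: "rid I \<Longrightarrow> a \<in> I \<Longrightarrow> b \<in> I \<Longrightarrow> a + b \<in> I" by (simp add: rid_def)
lemma rid_neg: "rid I \<Longrightarrow> a \<in> I \<Longrightarrow> - a \<in> I" by (simp add: rid_def)
lemma rid_diff: "rid I \<Longrightarrow> a \<in> I \<Longrightarrow> b \<in> I \<Longrightarrow> a - b \<in> I"
  by (metis diff_conv_add_uminus rid_add rid_neg)
lemma rid_mul: "rid I \<Longrightarrow> a \<in> I \<Longrightarrow> mul a r \<in> I" by (simp add: rid_def)
lemma maxr_rid: "maxr I \<Longrightarrow> rid I" by (simp add: maxr_def)

lemma rid_UNIV: "rid UNIV" by (simp add: rid_def)

lemma rid_Inter: "(\<And>I. I \<in> F \<Longrightarrow> rid I) \<Longrightarrow> rid (\<Inter>F)"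
  by (simp add: rid_def)

lemma rid_one: assumes "rid I" "one \<in> I" shows "I = UNIV"
proof -
  have "y \<in> I" for y using rid_mul[OF assms, of y] by (simp add: onel)
  thus ?thesis by auto
qed

lemma one_notin_maxr: "maxr m \<Longrightarrow> one \<notin> m"
  using rid_one unfolding maxr_def by blast

lemma maxr_gen:
  assumes "maxr m" "x \<notin> m"
  shows "\<exists>u \<mu>. \<mu> \<in> m \<and> z = mul x u + \<mu>"
proof -
  define K where "K = {y. \<exists>u \<mu>. \<mu> \<in> m \<and> y = mul x u + \<mu>}"
  have r: "rid m" using assms maxr_rid by auto
  have "rid K"
    unfolding rid_def
  proof (intro conjI ballI allI impI)
    have "0 \<in> m \<and> 0 = mul x 0 + 0" using rid_0[OF r] by simp
    thus "0 \<in> K" unfolding K_def by blast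
  next
    fix a b assume "a \<in> K" "b \<in> K"
    then obtain u \<mu> v \<nu> where h: "a = mul x u + \<mu>" "\<mu> \<in> m" "b = mul x v + \<nu>" "\<nu> \<in> m"
      unfolding K_def by blast
    have "\<mu> + \<nu> \<in> m \<and> a + b = mul x (u + v) + (\<mu> + \<nu>)"
      using h rid_add[OF r] by (simp add: distl add.assoc add.left_commute)
    thus "a + b \<in> K" unfolding K_def by blast
  next
    fix a assume "a \<in> K"
    then obtain u \<mu> where h: "a = mul x u + \<mu>" "\<mu> \<in> m" unfolding K_def by blast
    have "- \<mu> \<in> m \<and> - a = mul x (- u) + (- \<mu>)"
      using h rid_neg[OF r] by (simp add: minusr)
    thus "- a \<in> K" unfolding K_def by blast
  next
    fix r' a assume "a \<in> K"
    then obtain u \<mu> where h: "a = mul x u + \<mu>" "\<mu> \<in> m" unfolding K_def by blast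
    have "mul \<mu> r' \<in> m \<and> mul a r' = mul x (mul u r') + mul \<mu> r'"
      using h rid_mul[OF r] by (simp add: distr assoc)
    thus "mul a r' \<in> K" unfolding K_def by blast
  qed
  moreover have "m \<subseteq> K"
  proof
    fix \<mu> assume "\<mu> \<in> m"
    hence "\<mu> \<in> m \<and> \<mu> = mul x 0 + \<mu>" by simp
    thus "\<mu> \<in> K" unfolding K_def by blast
  qed
  moreover have "x \<in> K"
  proof -
    have "0 \<in> m \<and> x = mul x one + 0" using rid_0[OF r] oner by simp
    thus ?thesis unfolding K_def by blast
  qed
  ultimately have "K = m \<or> K = UNIV" using assms(1) unfolding maxr_def by simp
  moreover have "K \<noteq> m" using \<open>x \<in> K\<close> assms(2) by blast
  ultimately have "z \<in> K" by auto
  thus ?thesis unfolding K_def by blast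
qed

lemma kernel_max:
  assumes "maxr m" "x \<notin> m"
  shows "maxr {a. mul x a \<in> m}"
proof -
  have r: "rid m" using assms maxr_rid by auto
  let ?K = "{a. mul x a \<in> m}"
  have rk: "rid ?K" unfolding rid_def
  proof (intro conjI allI ballI impI)
    show "0 \<in> ?K" by (simp add: rid_0[OF r])
    show "a + b \<in> ?K" if "a \<in> ?K" "b \<in> ?K" for a b
      using that by (simp add: distl rid_add[OF r])
    show "- a \<in> ?K" if "a \<in> ?K" for a
      using that by (simp add: minusr rid_neg[OF r])
    show "mul a r' \<in> ?K" if "a \<in> ?K" for a r'
      using that rid_mul[OF r] by (simp add: assoc[symmetric])
  qed
  have "one \<notin> ?K" using assms oner by simp
  moreover have "K = ?K \<or> K = UNIV" if "rid K" "?K \<subseteq> K" for K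
  proof (cases "K \<subseteq> ?K")
    case True thus ?thesis using that by auto
  next
    case False
    then obtain i where i: "i \<in> K" "mul x i \<notin> m" by auto
    then obtain u \<mu> where "\<mu> \<in> m" "x = mul (mul x i) u + \<mu>" using maxr_gen[OF assms(1)] by blast
    hence e: "x = mul x (mul i u) + \<mu>" by (simp only: assoc)
    have "mul x (one - mul i u) = x - mul x (mul i u)" by (simp only: diffr oner)
    also have "\<dots> = \<mu>" by (subst e) (simp only: add_diff_cancel_left')
    finally have "mul x (one - mul i u) = \<mu>" .
    hence "one - mul i u \<in> ?K" using \<open>\<mu> \<in> m\<close> by simp
    hence "one - mul i u \<in> K" using that by auto
    moreover have "mul i u \<in> K" using rid_mul[OF that(1) i(1)] .
    ultimately have "(one - mul i u) + mul i u \<in> K" using rid_add[OF that(1)] by blast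
    hence "one \<in> K" by simp
    thus ?thesis using rid_one[OF that(1)] by blast
  qed
  moreover have "?K \<noteq> UNIV" using \<open>one \<notin> ?K\<close> by blast
  ultimately show ?thesis using rk unfolding maxr_def by blast
qed


lemma T_add: "rid B \<Longrightarrow> x \<in> T A B \<Longrightarrow> y \<in> T A B \<Longrightarrow> x + y \<in> T A B"
  by (simp add: T_def distr rid_add)
lemma T_diff: "rid B \<Longrightarrow> x \<in> T A B \<Longrightarrow> y \<in> T A B \<Longrightarrow> x - y \<in> T A B"
  by (simp add: T_def diffl rid_diff)
lemma T_sub: "rid B \<Longrightarrow> B \<subseteq> T A B"
  by (auto simp: T_def rid_mul)
lemma T_comp: "x \<in> T B C \<Longrightarrow> y \<in> T A B \<Longrightarrow> mul x y \<in> T A C"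
  by (simp add: T_def assoc)

lemma maxr_eq:
  assumes "maxr m" "maxr K" "m \<subseteq> K" shows "K = m"
  using assms unfolding maxr_def by blast

lemma schur:
  assumes mm: "maxr m" and mm': "maxr m'"
  shows "card (T m m') * card m \<le> card (T m' m) * card m'"
proof (cases "T m m' \<subseteq> m'")
  case True
  hence "T m m' = m'" using T_sub[OF maxr_rid[OF mm']] by blast
  moreover have "card m \<le> card (T m' m)"
    using T_sub[OF maxr_rid[OF mm]] by (simp add: card_mono)
  ultimately show ?thesis by simp
next
  case False
  then obtain x where x: "x \<in> T m m'" "x \<notin> m'" by blast
  have r: "rid m" and r': "rid m'" using mm mm' maxr_rid by auto
  obtain u \<mu>' where u: "\<mu>' \<in> m'" "one = mul x u + \<mu>'" using maxr_gen[OF mm' x(2)] by blast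
  have ker: "{a. mul x a \<in> m'} = m"
  proof (rule maxr_eq[OF mm kernel_max[OF mm' x(2)]])
    show "m \<subseteq> {a. mul x a \<in> m'}" using x(1) by (auto simp: T_def)
  qed
  have xu: "mul x u = one - \<mu>'" using u(2) by (simp add: eq_diff_eq)
  have uT: "u \<in> T m' m"
  proof -
    have "mul u \<mu> \<in> m" if "\<mu> \<in> m'" for \<mu>
    proof -
      have "mul x (mul u \<mu>) = \<mu> - mul \<mu>' \<mu>"
        by (simp only: assoc[symmetric] xu diffl onel)
      also have "\<dots> \<in> m'" using that u(1) by (simp add: rid_diff[OF r'] rid_mul[OF r'])
      finally show ?thesis using ker by blast
    qed
    thus ?thesis by (simp add: T_def)
  qed
  have ux: "one - mul u x \<in> m"
  proof -
    have "mul x (one - mul u x) = mul \<mu>' x"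
      by (simp only: diffr oner assoc[symmetric] xu diffl onel) simp
    also have "\<dots> \<in> m'" using u(1) by (simp add: rid_mul[OF r'])
    finally show ?thesis using ker by blast
  qed
  have key: "b \<in> m'" if b: "b \<in> T m m'" "mul (mul u b) u \<in> m" for b
  proof -
    have "mul x (mul (mul u b) u) \<in> m'" using x(1) b(2) by (simp add: T_def)
    moreover have "mul x (mul (mul u b) u) = mul b u - mul \<mu>' (mul b u)"
      by (simp only: assoc[symmetric] xu diffl onel)
    ultimately have "mul b u - mul \<mu>' (mul b u) \<in> m'" by simp
    moreover have "mul \<mu>' (mul b u) \<in> m'" using u(1) by (simp add: rid_mul[OF r'])
    ultimately have bu: "mul b u \<in> m'" using rid_add[OF r'] by fastforce
    have "b = mul (mul b u) x + mul b (one - mul u x)"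
      by (simp only: diffr oner assoc) simp
    also have "\<dots> \<in> m'"
      using bu ux b(1) by (simp add: T_def rid_add[OF r'] rid_mul[OF r'])
    finally show ?thesis .
  qed
  define F where "F = (\<lambda>(a, \<nu>). mul (mul u a) u + \<nu>)"
  have "card (T m m' \<times> m) \<le> card m' * card (T m' m)"
  proof (rule card_fiber_bound[where f = F])
    show "finite (T m m' \<times> m)" by simp
    show "finite (T m' m)" by simp
    show "F ` (T m m' \<times> m) \<subseteq> T m' m"
    proof clarify
      fix a \<nu> assume "a \<in> T m m'" "\<nu> \<in> m"
      have "mul (mul u a) u \<in> T m' m"
        unfolding assoc using T_comp[OF uT T_comp[OF \<open>a \<in> T m m'\<close> uT]] .
      moreover have "\<nu> \<in> T m' m" using T_sub[OF r] \<open>\<nu> \<in> m\<close> by blast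
      ultimately show "F (a, \<nu>) \<in> T m' m" unfolding F_def using T_add[OF r] by simp
    qed
    fix y
    show "card {p \<in> T m m' \<times> m. F p = y} \<le> card m'"
    proof (rule card_fiber_inj[where h = "\<lambda>p1 p. fst p - fst p1"])
      show "finite m'" by simp
      fix p1 assume p1: "p1 \<in> {p \<in> T m m' \<times> m. F p = y}"
      obtain a1 \<nu>1 where p1e: "p1 = (a1, \<nu>1)" by (cases p1)
      show "inj_on (\<lambda>p. fst p - fst p1) {p \<in> T m m' \<times> m. F p = y} \<and>
            (\<lambda>p. fst p - fst p1) ` {p \<in> T m m' \<times> m. F p = y} \<subseteq> m'"
      proof
        show "inj_on (\<lambda>p. fst p - fst p1) {p \<in> T m m' \<times> m. F p = y}"
        proof (rule inj_onI)
          fix p q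
          assume hp: "p \<in> {p \<in> T m m' \<times> m. F p = y}" and hq: "q \<in> {p \<in> T m m' \<times> m. F p = y}"
            and e: "fst p - fst p1 = fst q - fst p1"
          obtain a \<nu> where pe: "p = (a, \<nu>)" by (cases p)
          obtain a' \<nu>' where qe: "q = (a', \<nu>')" by (cases q)
          have "a = a'" using e pe qe by simp
          moreover have "mul (mul u a) u + \<nu> = mul (mul u a') u + \<nu>'" using hp hq pe qe unfolding F_def by simp
          ultimately show "p = q" using pe qe by simp
        qed
        show "(\<lambda>p. fst p - fst p1) ` {p \<in> T m m' \<times> m. F p = y} \<subseteq> m'"
        proof (rule image_subsetI)
          fix p assume hp: "p \<in> {p \<in> T m m' \<times> m. F p = y}"
          obtain a \<nu> where pe: "p = (a, \<nu>)" by (cases p)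
          have h: "a \<in> T m m'" "\<nu> \<in> m" "F (a, \<nu>) = y" using hp pe by auto
          have a1: "a1 \<in> T m m'" "\<nu>1 \<in> m" "F (a1, \<nu>1) = y" using p1 p1e by auto
          have "mul (mul u a) u + \<nu> = mul (mul u a1) u + \<nu>1" using h(3) a1(3) by (simp add: F_def)
          hence "mul (mul u (a - a1)) u = \<nu>1 - \<nu>"
            by (simp add: diffr diffl algebra_simps)
          also have "\<dots> \<in> m" using a1(2) h(2) by (simp add: rid_diff[OF r])
          finally have "a - a1 \<in> m'" using key T_diff[OF r' h(1) a1(1)] by blast
          thus "fst p - fst p1 \<in> m'" using p1e pe by simp
        qed
      qed
    qed
  qed
  thus ?thesis by (simp add: card_cartesian_product mult.commute)
qed


lemma T_mono: "A' \<subseteq> A \<Longrightarrow> T A B \<subseteq> T A' B"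
  by (auto simp: T_def)
lemma T_mono2: "B \<subseteq> B' \<Longrightarrow> T A B \<subseteq> T A B'"
  by (auto simp: T_def)

lemma step_ii:
  assumes rA: "rid A" and r': "rid m'"
  shows "card (T m (A \<inter> m')) * (card A * card m') \<le> card (A \<inter> m') * (card (T m A) * card (T m m'))"
proof -
  have rAm: "rid (A \<inter> m')" using rA r' by (simp add: rid_def)
  define F where "F = (\<lambda>(t, \<alpha>, \<mu>). (t + \<alpha>, t + (\<mu>::'r)))"
  have "card (T m (A \<inter> m') \<times> (A \<times> m')) \<le> card (A \<inter> m') * card (T m A \<times> T m m')"
  proof (rule fiber_bound_diff[where F = F and g = fst])
    show "F ` (T m (A \<inter> m') \<times> A \<times> m') \<subseteq> T m A \<times> T m m'"
    proof (rule image_subsetI)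
      fix p assume "p \<in> T m (A \<inter> m') \<times> A \<times> m'"
      then obtain t \<alpha> \<mu> where pe: "p = (t, \<alpha>, \<mu>)" and h: "t \<in> T m (A \<inter> m')" "\<alpha> \<in> A" "\<mu> \<in> m'"
        by auto
      have "t \<in> T m A" "t \<in> T m m'" using h(1) T_mono2[of "A \<inter> m'" A m] T_mono2[of "A \<inter> m'" m' m] by auto
      moreover have "\<alpha> \<in> T m A" "\<mu> \<in> T m m'" using h T_sub[OF rA] T_sub[OF r'] by auto
      ultimately have "t + \<alpha> \<in> T m A" "t + \<mu> \<in> T m m'" using T_add[OF rA] T_add[OF r'] by auto
      thus "F p \<in> T m A \<times> T m m'" using pe F_def by auto
    qed
    fix p q assume hp: "p \<in> T m (A \<inter> m') \<times> A \<times> m'" and hq: "q \<in> T m (A \<inter> m') \<times> A \<times> m'"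
      and e: "F p = F q"
    obtain t \<alpha> \<mu> where pe: "p = (t, \<alpha>, \<mu>)" by (cases p) auto
    obtain t' \<alpha>' \<mu>' where qe: "q = (t', \<alpha>', \<mu>')" by (cases q) auto
    have e1: "t + \<alpha> = t' + \<alpha>'" and e2: "t + \<mu> = t' + \<mu>'" using e pe qe F_def by auto
    have d1: "t - t' = \<alpha>' - \<alpha>" using e1 by (simp add: algebra_simps)
    have d2: "t - t' = \<mu>' - \<mu>" using e2 by (simp add: algebra_simps)
    have "\<alpha>' - \<alpha> \<in> A" using hp hq pe qe rid_diff[OF rA] by auto
    moreover have "\<mu>' - \<mu> \<in> m'" using hp hq pe qe rid_diff[OF r'] by auto
    ultimately have "t - t' \<in> A \<inter> m'" using d1 d2 by simp
    thus "fst p - fst q \<in> A \<inter> m'" using pe qe by simp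
    show "fst p = fst q \<Longrightarrow> p = q" using e1 e2 pe qe by auto
  qed simp_all
  thus ?thesis by (simp add: card_cartesian_product)
qed

lemma key4:
  assumes r: "rid m" and a: "a \<in> T A m" and b: "b \<in> T m' m" and ab: "a + b \<in> m"
    and \<alpha>: "\<alpha> \<in> A" "\<alpha>' \<in> m'" "one = \<alpha> + \<alpha>'"
  shows "a \<in> m \<and> b \<in> m"
proof -
  have "mul a \<alpha> \<in> m" using a \<alpha> by (simp add: T_def)
  moreover have "mul (a + b) \<alpha> \<in> m" using ab rid_mul[OF r] by blast
  ultimately have "mul (a + b) \<alpha> - mul a \<alpha> \<in> m" using rid_diff[OF r] by blast
  hence "mul b \<alpha> \<in> m" by (simp add: distr)
  moreover have "mul b \<alpha>' \<in> m" using b \<alpha> by (simp add: T_def)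
  ultimately have "mul b \<alpha> + mul b \<alpha>' \<in> m" using rid_add[OF r] by blast
  hence "mul b (\<alpha> + \<alpha>') \<in> m" by (simp add: distl)
  moreover have "mul b (\<alpha> + \<alpha>') = b" by (simp only: \<alpha>(3)[symmetric] oner)
  ultimately have bm: "b \<in> m" by simp
  have "(a + b) - b \<in> m" using ab bm rid_diff[OF r] by blast
  thus ?thesis using bm by simp
qed

lemma step_iv:
  assumes r: "rid m" and rA: "rid A" and r': "rid m'"
    and \<alpha>: "\<alpha> \<in> A" "\<alpha>' \<in> m'" "one = \<alpha> + \<alpha>'"
  shows "card (T A m) * card (T m' m) \<le> card m * card (T (A \<inter> m') m)"
proof -
  define F where "F = (\<lambda>(a, b). (a + b::'r))"
  have "card (T A m \<times> T m' m) \<le> card m * card (T (A \<inter> m') m)"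
  proof (rule fiber_bound_diff[where F = F and g = fst])
    show "F ` (T A m \<times> T m' m) \<subseteq> T (A \<inter> m') m"
    proof (rule image_subsetI)
      fix p assume "p \<in> T A m \<times> T m' m"
      then obtain a b where pe: "p = (a, b)" and h: "a \<in> T A m" "b \<in> T m' m" by auto
      have "a \<in> T (A \<inter> m') m" "b \<in> T (A \<inter> m') m" using h T_mono[of "A \<inter> m'" A m] T_mono[of "A \<inter> m'" m' m] by auto
      thus "F p \<in> T (A \<inter> m') m" using T_add[OF r] pe F_def by auto
    qed
    fix p q assume hp: "p \<in> T A m \<times> T m' m" and hq: "q \<in> T A m \<times> T m' m" and e: "F p = F q"
    obtain a b where pe: "p = (a, b)" by (cases p)
    obtain a' b' where qe: "q = (a', b')" by (cases q)
    have e1: "a + b = a' + b'" using e pe qe F_def by auto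
    have d: "a - a' \<in> T A m" "b - b' \<in> T m' m" using hp hq pe qe T_diff[OF r] by auto
    have "(a - a') + (b - b') = 0" using e1 by (simp add: algebra_simps)
    hence "(a - a') + (b - b') \<in> m" using rid_0[OF r] by simp
    hence "a - a' \<in> m" using key4[OF r d _ \<alpha>] by blast
    thus "fst p - fst q \<in> m" using pe qe by simp
    show "fst p = fst q \<Longrightarrow> p = q" using e1 pe qe by auto
  qed simp_all
  thus ?thesis by (simp add: card_cartesian_product)
qed


lemma card_pos_rid: "rid A \<Longrightarrow> card A > 0"
  using rid_0[of A] by (simp add: card_gt_0_iff) blast

lemma sum_one:
  assumes "maxr m'" "rid A" "\<not> A \<subseteq> m'"
  shows "\<exists>\<alpha> \<alpha>'. \<alpha> \<in> A \<and> \<alpha>' \<in> m' \<and> one = \<alpha> + \<alpha>'"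
proof -
  obtain a where a: "a \<in> A" "a \<notin> m'" using assms(3) by blast
  obtain u \<mu> where "\<mu> \<in> m'" "one = mul a u + \<mu>" using maxr_gen[OF assms(1) a(2)] by blast
  moreover have "mul a u \<in> A" using rid_mul[OF assms(2) a(1)] .
  ultimately show ?thesis by blast
qed

lemma chain:
  assumes mm: "maxr m" and fin: "finite F" and allm: "\<forall>I\<in>F. maxr I"
  shows "card (T m (\<Inter>F)) * card m \<le> card (T (\<Inter>F) m) * card (\<Inter>F)"
  using fin allm
proof (induction F rule: finite_induct)
  case empty
  have "T m UNIV = UNIV" by (simp add: T_def)
  moreover have "card m \<le> card (T UNIV m)" using T_sub[OF maxr_rid[OF mm]] by (simp add: card_mono)
  ultimately show ?case by (simp add: mult.commute)
next
  case (insert m' F)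
  let ?A = "\<Inter>F"
  have mm': "maxr m'" using insert by simp
  have rA: "rid ?A" using insert by (intro rid_Inter) (simp add: maxr_rid)
  have r': "rid m'" and r: "rid m" using mm' mm maxr_rid by auto
  have IH: "card (T m ?A) * card m \<le> card (T ?A m) * card ?A" using insert by simp
  have eq: "\<Inter>(insert m' F) = ?A \<inter> m'" by auto
  show ?case
  proof (cases "?A \<subseteq> m'")
    case True
    hence "\<Inter>(insert m' F) = ?A" by auto
    thus ?thesis using IH by simp
  next
    case False
    then obtain \<alpha> \<alpha>' where \<alpha>: "\<alpha> \<in> ?A" "\<alpha>' \<in> m'" "one = \<alpha> + \<alpha>'"
      using sum_one[OF mm' rA] by blast
    have rAm: "rid (?A \<inter> m')" using rA r' by (simp add: rid_def)
    show ?thesis unfolding eq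
      by (rule arith_combine[OF step_ii[OF rA r'] IH schur[OF mm mm'] step_iv[OF r rA r' \<alpha>]])
         (simp_all add: card_pos_rid rA r r')
  qed
qed

lemma lann_in_range:
  assumes F1: "\<And>I. minr I \<Longrightarrow> I \<subseteq> range (mul d)" and mm: "maxr m" and x: "x \<in> lann m"
  shows "x \<in> range (mul d)"
proof (cases "x = 0")
  case True
  have "mul d 0 = x" using True by simp
  then show ?thesis by (rule range_eqI[OF sym])
next
  case False
  define xR where "xR = {y. \<exists>r. y = mul x r}"
  have r: "rid m" using mm maxr_rid by auto
  have xx: "x \<in> xR" unfolding xR_def using oner[of x, symmetric] by blast
  have rx: "rid xR" unfolding rid_def xR_def
  proof (intro conjI ballI allI impI)
    have "0 = mul x 0" by simp
    thus "0 \<in> {y. \<exists>r. y = mul x r}" by blast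
    fix a b assume "a \<in> {y. \<exists>r. y = mul x r}" "b \<in> {y. \<exists>r. y = mul x r}"
    then obtain r s where "a = mul x r" "b = mul x s" by auto
    hence "a + b = mul x (r + s)" by (simp add: distl)
    thus "a + b \<in> {y. \<exists>r. y = mul x r}" by blast
  next
    fix a assume "a \<in> {y. \<exists>r. y = mul x r}"
    then obtain r where "a = mul x r" by auto
    hence "- a = mul x (- r)" by (simp add: minusr)
    thus "- a \<in> {y. \<exists>r. y = mul x r}" by blast
  next
    fix a s assume "a \<in> {y. \<exists>r. y = mul x r}"
    then obtain r where "a = mul x r" by auto
    hence "mul a s = mul x (mul r s)" by (simp add: assoc)
    thus "mul a s \<in> {y. \<exists>r. y = mul x r}" by blast
  qed
  have "minr xR" unfolding minr_def
  proof (intro conjI allI impI)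
    show "rid xR" by fact
    show "xR \<noteq> {0}" using xx False by blast
    fix K assume K: "rid K \<and> K \<subseteq> xR"
    show "K = {0} \<or> K = xR"
    proof (cases "K \<subseteq> {0}")
      case True hence "K = {0}" using K rid_0 by blast
      thus ?thesis by blast
    next
      case False
      then obtain k where k: "k \<in> K" "k \<noteq> 0" by blast
      then obtain r where kr: "k = mul x r" using K unfolding xR_def by blast
      have "r \<notin> m" using x k(2) kr by (auto simp: lann_def)
      then obtain c \<mu> where c: "\<mu> \<in> m" "one = mul r c + \<mu>" using maxr_gen[OF mm] by blast
      have "x = mul x (mul r c + \<mu>)" by (simp only: c(2)[symmetric] oner)
      also have "\<dots> = mul k c" using x c(1) kr by (simp add: distl lann_def assoc)
      finally have "x \<in> K" using rid_mul[OF conjunct1[OF K] k(1)] by simp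
      hence "xR \<subseteq> K" unfolding xR_def using rid_mul[OF conjunct1[OF K]] by blast
      thus ?thesis using K by blast
    qed
  qed
  thus ?thesis using F1 xx by blast
qed

lemma core:
  assumes F1: "\<And>I. minr I \<Longrightarrow> I \<subseteq> range (mul d)"
    and F2: "{a. mul d a = 0} = \<Inter>{I. maxr I}"
    and mm: "maxr m"
  shows "card (lann m) * card m \<le> card (UNIV::'r set)"
proof -
  define J where "J = \<Inter>{I. maxr I}"
  have r: "rid m" using mm maxr_rid by auto
  have ch: "card (T m J) * card m \<le> card (T J m) * card J"
    unfolding J_def by (rule chain[OF mm]) simp_all
  have "T J m = UNIV"
  proof -
    have "x \<in> T J m" for x
    proof (cases "x \<in> m")
      case True thus ?thesis using T_sub[OF r] by blast
    next
      case False
      hence "J \<subseteq> {a. mul x a \<in> m}" using kernel_max[OF mm False] unfolding J_def by blast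
      thus ?thesis by (auto simp: T_def)
    qed
    thus ?thesis by blast
  qed
  have rJ: "rid J" unfolding J_def by (rule rid_Inter) (simp add: maxr_rid)
  have Jd: "J = {a. mul d a = 0}" using F2 J_def by simp
  define yy where "yy = (\<lambda>x. SOME y. x = mul d y)"
  have yy: "mul d (yy x) = x" if "x \<in> lann m" for x
  proof -
    have "\<exists>y. x = mul d y" using lann_in_range[OF F1 mm that] by blast
    hence "x = mul d (yy x)" unfolding yy_def by (rule someI_ex)
    thus ?thesis by (rule sym)
  qed
  have "card (lann m \<times> J) \<le> card (T m J)"
  proof (rule card_inj_on_le[where f = "\<lambda>(x, j). yy x + j"])
    show "inj_on (\<lambda>(x, j). yy x + j) (lann m \<times> J)"
    proof (rule inj_onI, clarify)
      fix x j x' j' assume h: "x \<in> lann m" "j \<in> J" "x' \<in> lann m" "j' \<in> J" "yy x + j = yy x' + j'"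
      have "mul d (yy x + j) = mul d (yy x' + j')" using h(5) by simp
      moreover have "mul d (yy x + j) = x" using h(1,2) Jd yy[OF h(1)] by (simp add: distl)
      moreover have "mul d (yy x' + j') = x'" using h(3,4) Jd yy[OF h(3)] by (simp add: distl)
      ultimately have "x = x'" by simp
      thus "x = x' \<and> j = j'" using h(5) by simp
    qed
    show "(\<lambda>(x, j). yy x + j) ` (lann m \<times> J) \<subseteq> T m J"
    proof clarify
      fix x j assume h: "x \<in> lann m" "j \<in> J"
      have "mul (yy x + j) a \<in> J" if "a \<in> m" for a
      proof -
        have "mul d (mul (yy x + j) a) = mul (mul d (yy x)) a + mul (mul d j) a"
          by (simp add: assoc[symmetric] distl distr)
        also have "\<dots> = 0" using h that yy Jd by (simp add: lann_def)
        finally show ?thesis using Jd by simp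
      qed
      thus "yy x + j \<in> T m J" by (simp add: T_def)
    qed
  qed simp
  hence "card (lann m) * card J * card m \<le> card (T m J) * card m"
    by (simp add: card_cartesian_product)
  also have "\<dots> \<le> card (UNIV::'r set) * card J" using ch \<open>T J m = UNIV\<close> by simp
  finally have "(card (lann m) * card m) * card J \<le> card (UNIV::'r set) * card J"
    by (simp add: ac_simps)
  thus ?thesis using card_pos_rid[OF rJ] by simp
qed

end

locale xmod = xring mul one for mul :: "'r::{ab_group_add,finite} \<Rightarrow> 'r \<Rightarrow> 'r" and one +
  fixes act :: "'m::{ab_group_add,finite} \<Rightarrow> 'r \<Rightarrow> 'm" and d :: 'r
  assumes act_addl: "act (x + y) r = act x r + act y r"
    and act_addr: "act x (r + t) = act x r + act x t"
    and act_mul: "act x (mul r t) = act (act x r) t"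
    and act_one: "act x one = x"
    and F1: "\<And>I. minr I \<Longrightarrow> I \<subseteq> range (mul d)"
    and F2: "{a. mul d a = 0} = \<Inter>{I. maxr I}"
begin

lemma act0r[simp]: "act x 0 = 0"
proof -
  have "act x 0 + act x 0 = act x 0 + 0" using act_addr[of x 0 0] by (simp only: add_0 add_0_right)
  thus ?thesis by (simp only: add_left_cancel)
qed
lemma act0l[simp]: "act 0 r = 0"
proof -
  have "act 0 r + act 0 r = act 0 r + 0" using act_addl[of 0 0 r] by (simp only: add_0 add_0_right)
  thus ?thesis by (simp only: add_left_cancel)
qed
lemma act_negr: "act x (- r) = - act x r"
proof -
  have "act x (- r) + act x r = 0" using act_addr[of x "-r" r] by simp
  thus ?thesis by (simp add: add_eq_0_iff2)
qed
lemma act_negl: "act (- x) r = - act x r"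
proof -
  have "act (- x) r + act x r = 0" using act_addl[of "-x" x r] by simp
  thus ?thesis by (simp add: add_eq_0_iff2)
qed
lemma act_diffr: "act x (r - t) = act x r - act x t"
  by (simp only: diff_conv_add_uminus act_addr act_negr)
lemma act_diffl: "act (x - y) r = act x r - act y r"
  by (simp only: diff_conv_add_uminus act_addl act_negl)

definition sub :: "'m set \<Rightarrow> bool" where
  "sub N \<longleftrightarrow> 0 \<in> N \<and> (\<forall>x\<in>N. \<forall>y\<in>N. x + y \<in> N) \<and> (\<forall>x\<in>N. - x \<in> N) \<and> (\<forall>x\<in>N. \<forall>r. act x r \<in> N)"

definition Dual :: "'m set \<Rightarrow> ('m \<Rightarrow> 'r) set" where
  "Dual N = {f. (\<forall>y. y \<notin> N \<longrightarrow> f y = 0) \<and> (\<forall>x\<in>N. \<forall>y\<in>N. f (x + y) = f x + f y)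
               \<and> (\<forall>y\<in>N. \<forall>r. f (act y r) = mul (f y) r)}"

lemma DualD0: "f \<in> Dual N \<Longrightarrow> y \<notin> N \<Longrightarrow> f y = 0" unfolding Dual_def by blast
lemma DualD1: "f \<in> Dual N \<Longrightarrow> x \<in> N \<Longrightarrow> y \<in> N \<Longrightarrow> f (x + y) = f x + f y"
proof -
  assume f: "f \<in> Dual N" and x: "x \<in> N" and y: "y \<in> N"
  have D: "(\<forall>y. y \<notin> N \<longrightarrow> f y = 0) \<and> (\<forall>x\<in>N. \<forall>y\<in>N. f (x + y) = f x + f y)
               \<and> (\<forall>y\<in>N. \<forall>r. f (act y r) = mul (f y) r)" using f unfolding Dual_def by (rule CollectD)
  have "\<forall>x\<in>N. \<forall>y\<in>N. f (x + y) = f x + f y" using conjunct1[OF conjunct2[OF D]] .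
  hence "\<forall>y\<in>N. f (x + y) = f x + f y" using x by (rule bspec)
  thus "f (x + y) = f x + f y" using y by (rule bspec)
qed
lemma DualD2: "f \<in> Dual N \<Longrightarrow> y \<in> N \<Longrightarrow> f (act y r) = mul (f y) r"
  unfolding Dual_def by blast

lemma sub_0: "sub N \<Longrightarrow> 0 \<in> N" by (simp add: sub_def)
lemma sub_add: "sub N \<Longrightarrow> x \<in> N \<Longrightarrow> y \<in> N \<Longrightarrow> x + y \<in> N" by (simp add: sub_def)
lemma sub_neg: "sub N \<Longrightarrow> x \<in> N \<Longrightarrow> - x \<in> N" by (simp add: sub_def)
lemma sub_act: "sub N \<Longrightarrow> x \<in> N \<Longrightarrow> act x r \<in> N" by (simp add: sub_def)
lemma sub_diff: "sub N \<Longrightarrow> x \<in> N \<Longrightarrow> y \<in> N \<Longrightarrow> x - y \<in> N"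
  by (metis diff_conv_add_uminus sub_add sub_neg)

lemma NK_sub:
  assumes "sub N0" "rid K"
  shows "sub {y. \<exists>n\<in>N0. \<exists>k\<in>K. y = n + act s k}"
  unfolding sub_def
proof (intro conjI ballI allI)
  have "0 \<in> N0" "0 \<in> K" "(0::'m) = 0 + act s 0" using assms sub_0 rid_0 by auto
  thus "0 \<in> {y. \<exists>n\<in>N0. \<exists>k\<in>K. y = n + act s k}" by blast
next
  fix x y assume "x \<in> {y. \<exists>n\<in>N0. \<exists>k\<in>K. y = n + act s k}" "y \<in> {y. \<exists>n\<in>N0. \<exists>k\<in>K. y = n + act s k}"
  then obtain n k n' k' where h: "n \<in> N0" "k \<in> K" "x = n + act s k" "n' \<in> N0" "k' \<in> K" "y = n' + act s k'"
    by blast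
  have "n + n' \<in> N0" "k + k' \<in> K" "x + y = (n + n') + act s (k + k')"
    using h sub_add[OF assms(1)] rid_add[OF assms(2)] by (auto simp: act_addr algebra_simps)
  thus "x + y \<in> {y. \<exists>n\<in>N0. \<exists>k\<in>K. y = n + act s k}" by blast
next
  fix x assume "x \<in> {y. \<exists>n\<in>N0. \<exists>k\<in>K. y = n + act s k}"
  then obtain n k where h: "n \<in> N0" "k \<in> K" "x = n + act s k" by blast
  have "- n \<in> N0" "- k \<in> K" "- x = (- n) + act s (- k)"
    using h sub_neg[OF assms(1)] rid_neg[OF assms(2)] by (auto simp: act_negr)
  thus "- x \<in> {y. \<exists>n\<in>N0. \<exists>k\<in>K. y = n + act s k}" by blast
next
  fix x r assume "x \<in> {y. \<exists>n\<in>N0. \<exists>k\<in>K. y = n + act s k}"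
  then obtain n k where h: "n \<in> N0" "k \<in> K" "x = n + act s k" by blast
  have "act n r \<in> N0" "mul k r \<in> K" "act x r = act n r + act s (mul k r)"
    using h sub_act[OF assms(1)] rid_mul[OF assms(2)] by (auto simp: act_addl act_mul)
  thus "act x r \<in> {y. \<exists>n\<in>N0. \<exists>k\<in>K. y = n + act s k}" by blast
qed

lemma dual_le:
  assumes "sub N"
  shows "card (Dual N) \<le> card N"
  using assms
proof (induction "card N" arbitrary: N rule: less_induct)
  case less
  have finD: "finite (Dual M)" for M by (rule finite_subset[OF subset_UNIV]) simp
  show ?case
  proof (cases "N = {0}")
    case True
    have "Dual N \<subseteq> {\<lambda>_. 0}"
    proof
      fix f assume f: "f \<in> Dual N"
      have D: "(\<forall>y. y \<notin> N \<longrightarrow> f y = 0) \<and> (\<forall>x\<in>N. \<forall>y\<in>N. f (x + y) = f x + f y)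
               \<and> (\<forall>y\<in>N. \<forall>r. f (act y r) = mul (f y) r)" using f unfolding Dual_def by (rule CollectD)
      have z: "0 \<in> N" using True by simp
      have h: "f (0 + 0) = f 0 + f 0" using bspec[OF bspec[OF conjunct1[OF conjunct2[OF D]] z] z] .
      have "f 0 + f 0 = f 0 + 0" by (simp only: add_0_right h[symmetric] add_0)
      hence "f 0 = 0" by (simp only: add_left_cancel)
      moreover have "\<forall>y. y \<notin> N \<longrightarrow> f y = 0" using conjunct1[OF D] .
      ultimately have "f y = 0" for y using True by (cases "y = 0") auto
      thus "f \<in> {\<lambda>_. 0}" by auto
    qed
    hence "card (Dual N) \<le> card {\<lambda>_::'m. 0::'r}" by (rule card_mono[rotated]) simp
    hence "card (Dual N) \<le> 1" by simp
    thus ?thesis using True by simp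
  next
    case False
    define P where "P = {N'. sub N' \<and> N' \<subset> N}"
    have "sub {0}" by (simp add: sub_def)
    moreover have "{0} \<subset> N" using False sub_0[OF less.prems] by blast
    ultimately have P0: "{0} \<in> P" unfolding P_def by blast
    have finP: "finite P" by simp
    obtain N0 where N0: "N0 \<in> P" "\<forall>N' \<in> P. card N' \<le> card N0"
    proof -
      let ?c = "Max (card ` P)"
      have "?c \<in> card ` P" using finP P0 by (intro Max_in) auto
      then obtain N0 where "N0 \<in> P" "card N0 = ?c" by auto
      moreover have "\<forall>N'\<in>P. card N' \<le> ?c" using finP by simp
      ultimately show ?thesis using that by metis
    qed
    have sN0: "sub N0" and psN0: "N0 \<subset> N" using N0 P_def by auto
    have sN: "sub N" by fact
    have maxN0: "N1 = N" if "sub N1" "N0 \<subset> N1" "N1 \<subseteq> N" for N1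
    proof (rule ccontr)
      assume "N1 \<noteq> N"
      hence "N1 \<in> P" using that P_def by auto
      hence "card N1 \<le> card N0" using N0 by auto
      moreover have "card N0 < card N1" using that(2) by (simp add: psubset_card_mono)
      ultimately show False by simp
    qed
    obtain s where s: "s \<in> N" "s \<notin> N0" using psN0 by blast
    define m where "m = {r. act s r \<in> N0}"
    define NK where "NK = (\<lambda>K. {y. \<exists>n\<in>N0. \<exists>k\<in>K. y = n + act s k})"
    have NKprops: "sub (NK K) \<and> N0 \<subseteq> NK K \<and> NK K \<subseteq> N" if "rid K" for K
    proof (intro conjI)
      show "sub (NK K)" unfolding NK_def by (rule NK_sub[OF sN0 that])
      show "N0 \<subseteq> NK K"
      proof
        fix n assume "n \<in> N0"
        moreover have "0 \<in> K" "n = n + act s 0" using rid_0[OF that] by auto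
        ultimately show "n \<in> NK K" unfolding NK_def by blast
      qed
      show "NK K \<subseteq> N"
      proof
        fix y assume "y \<in> NK K"
        then obtain n k where "n \<in> N0" "y = n + act s k" unfolding NK_def by blast
        moreover have "n \<in> N" using \<open>n \<in> N0\<close> psN0 by blast
        ultimately show "y \<in> N" using sub_add[OF sN] sub_act[OF sN s(1)] by simp
      qed
    qed
    have actNK: "act s k \<in> NK K" if "k \<in> K" "rid K" for k K
    proof -
      have "0 \<in> N0" "act s k = 0 + act s k" using sub_0[OF sN0] by auto
      thus ?thesis unfolding NK_def using that(1) by blast
    qed
    have NU: "NK UNIV = N"
    proof (rule maxN0)
      show "sub (NK UNIV)" using NKprops[OF rid_UNIV] by blast
      show "NK UNIV \<subseteq> N" using NKprops[OF rid_UNIV] by blast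
      have "act s one \<in> NK UNIV" using actNK[OF UNIV_I rid_UNIV] .
      hence "s \<in> NK UNIV" by (simp only: act_one)
      thus "N0 \<subset> NK UNIV" using NKprops[OF rid_UNIV] s(2) by blast
    qed
    have rm: "rid m" unfolding rid_def m_def
      using sub_0[OF sN0] sub_add[OF sN0] sub_neg[OF sN0] sub_act[OF sN0]
      by (auto simp: act_addr act_negr act_mul)
    have mm: "maxr m" unfolding maxr_def
    proof (intro conjI allI impI)
      show "rid m" by fact
      have "one \<notin> m" using s(2) act_one[of s] unfolding m_def by simp
      thus "m \<noteq> UNIV" by blast
      fix K assume K: "rid K \<and> m \<subseteq> K"
      show "K = m \<or> K = UNIV"
      proof (cases "K \<subseteq> m")
        case True thus ?thesis using K by blast
      next
        case False
        then obtain k where k: "k \<in> K" "k \<notin> m" by blast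
        have "act s k \<in> NK K" using actNK k K by blast
        moreover have "act s k \<notin> N0" using k(2) m_def by simp
        ultimately have "N0 \<subset> NK K" using NKprops K by blast
        hence "NK K = N" using maxN0 NKprops K by blast
        hence "s \<in> NK K" using s by simp
        then obtain n k' where nk: "n \<in> N0" "k' \<in> K" "s = n + act s k'" unfolding NK_def by blast
        have "act s (one - k') = s - act s k'" by (simp only: act_diffr act_one)
        also have "\<dots> = n" using nk(3) add_diff_cancel_right' by metis
        finally have "one - k' \<in> m" using nk(1) m_def by simp
        hence "one - k' \<in> K" using K by blast
        hence "(one - k') + k' \<in> K" using rid_add[OF conjunct1[OF K] _ nk(2)] by blast
        hence "one \<in> K" by simp
        thus ?thesis using rid_one K by blast
      qed
    qed
    have cN: "card (N0 \<times> (UNIV::'r set)) \<le> card m * card N"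
    proof (rule fiber_bound_diff[where F = "\<lambda>(n, r). n + act s r" and g = snd])
      show "(\<lambda>(n, r). n + act s r) ` (N0 \<times> UNIV) \<subseteq> N"
      proof (rule image_subsetI)
        fix p assume "p \<in> N0 \<times> (UNIV::'r set)"
        then obtain n r where pe: "p = (n, r)" "n \<in> N0" by auto
        hence "n + act s r \<in> NK UNIV" unfolding NK_def by blast
        thus "(\<lambda>(n, r). n + act s r) p \<in> N" using NU pe by simp
      qed
      fix p q assume hp: "p \<in> N0 \<times> (UNIV::'r set)" and hq: "q \<in> N0 \<times> (UNIV::'r set)"
        and e: "(\<lambda>(n, r). n + act s r) p = (\<lambda>(n, r). n + act s r) q"
      obtain n r where pe: "p = (n, r)" by (cases p)
      obtain n' r' where qe: "q = (n', r')" by (cases q)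
      have e': "n + act s r = n' + act s r'" using e pe qe by simp
      have "act s (r - r') = act s r - act s r'" by (rule act_diffr)
      also have "\<dots> = n' - n" using e' by (metis add_diff_cancel_left add_diff_cancel_right' add_diff_eq diff_add_eq diff_diff_eq2 eq_diff_eq)
      finally have "act s (r - r') = n' - n" .
      moreover have "n' - n \<in> N0" using hp hq pe qe sub_diff[OF sN0] by auto
      ultimately show "snd p - snd q \<in> m" using pe qe m_def by simp
      show "snd p = snd q \<Longrightarrow> p = q" using e' pe qe by simp
    qed simp_all
    define \<rho> where "\<rho> = (\<lambda>f::'m \<Rightarrow> 'r. \<lambda>y. if y \<in> N0 then f y else 0)"
    have N0N: "N0 \<subseteq> N" using psN0 by blast
    have cD: "card (Dual N) \<le> card (lann m) * card (Dual N0)"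
    proof (rule fiber_bound_diff[where F = \<rho> and g = "\<lambda>f. f s"])
      show "finite (Dual N)" "finite (Dual N0)" by (rule finD)+
      show "finite (lann m)" by simp
      show "\<rho> ` Dual N \<subseteq> Dual N0"
      proof (rule image_subsetI)
        fix f assume f: "f \<in> Dual N"
        show "\<rho> f \<in> Dual N0" unfolding Dual_def \<rho>_def
        proof (intro CollectI conjI allI impI ballI)
          fix x y assume "x \<in> N0" "y \<in> N0"
          thus "(if x + y \<in> N0 then f (x + y) else 0) = (if x \<in> N0 then f x else 0) + (if y \<in> N0 then f y else 0)"
            using DualD1[OF f] N0N sub_add[OF sN0] by auto
        next
          fix y r assume "y \<in> N0"
          thus "(if act y r \<in> N0 then f (act y r) else 0) = mul (if y \<in> N0 then f y else 0) r"
            using DualD2[OF f] N0N sub_act[OF sN0] by auto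
        qed simp
      qed
      fix f f' assume f: "f \<in> Dual N" and f': "f' \<in> Dual N" and e: "\<rho> f = \<rho> f'"
      show "f s - f' s \<in> lann m" unfolding lann_def
      proof (intro CollectI ballI)
        fix r assume "r \<in> m"
        hence r: "act s r \<in> N0" using m_def by simp
        have "mul (f s - f' s) r = f (act s r) - f' (act s r)"
          using DualD2[OF f s(1)] DualD2[OF f' s(1)] by (simp add: diffl)
        also have "\<dots> = \<rho> f (act s r) - \<rho> f' (act s r)" using r \<rho>_def by simp
        also have "\<dots> = 0" using e by simp
        finally show "mul (f s - f' s) r = 0" .
      qed
      assume fs: "f s = f' s"
      show "f = f'"
      proof
        fix y show "f y = f' y"
        proof (cases "y \<in> N")
          case False thus ?thesis using DualD0[OF f] DualD0[OF f'] by simp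
        next
          case True
          then obtain n k where nk: "n \<in> N0" "y = n + act s k" using NU unfolding NK_def by blast
          have nN: "n \<in> N" "act s k \<in> N" using nk N0N sub_act[OF sN s(1)] by auto
          have "f y = f n + mul (f s) k" using DualD1[OF f nN] DualD2[OF f s(1)] nk by simp
          also have "f n = f' n" using e nk(1) unfolding \<rho>_def by (metis (full_types))
          also have "f' n + mul (f s) k = f' y" using DualD1[OF f' nN] DualD2[OF f' s(1)] nk fs by simp
          finally show ?thesis .
        qed
      qed
    qed
    have IH: "card (Dual N0) \<le> card N0"
      using less.hyps[OF psubset_card_mono[OF _ psN0] sN0] by simp
    have core': "card (lann m) * card m \<le> card (UNIV::'r set)" by (rule core[OF F1 F2 mm])
    have "card (Dual N) \<le> card (lann m) * card N0"
      using cD IH by (meson le_trans mult_le_mono2)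
    hence "card (Dual N) * card m \<le> card (lann m) * card N0 * card m"
      by (rule mult_right_mono) simp
    also have "\<dots> = (card (lann m) * card m) * card N0" by (simp add: ac_simps)
    also have "\<dots> \<le> card (UNIV::'r set) * card N0" using core' by simp
    also have "\<dots> \<le> card N * card m" using cN by (simp add: card_cartesian_product ac_simps)
    finally show ?thesis using card_pos_rid[OF rm] by simp
  qed
qed

lemma dual_UNIV:
  "card {f :: 'm \<Rightarrow> 'r. (\<forall>x y. f (x + y) = f x + f y) \<and> (\<forall>y r. f (act y r) = mul (f y) r)}
     \<le> card (UNIV :: 'm set)"
proof -
  have "sub UNIV" by (simp add: sub_def)
  moreover have "Dual UNIV = {f :: 'm \<Rightarrow> 'r. (\<forall>x y. f (x + y) = f x + f y) \<and> (\<forall>y r. f (act y r) = mul (f y) r)}"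
    by (simp add: Dual_def)
  ultimately show ?thesis using dual_le by metis
qed

end

lemma bil_diff1:
  assumes "bilinear_form lm rm B"
  shows "B (x - x') y = B x y - B x' y"
proof -
  have "B ((x - x') + x') y = B (x - x') y + B x' y" using assms unfolding bilinear_form_def by blast
  thus ?thesis by (simp add: eq_diff_eq)
qed

lemma bil_diff2:
  assumes "bilinear_form lm rm B"
  shows "B x (y - y') = B x y - B x y'"
proof -
  have "B x ((y - y') + y') = B x (y - y') + B x y'" using assms unfolding bilinear_form_def by blast
  thus ?thesis by (simp add: eq_diff_eq)
qed

lemma part_left:
  fixes lm :: "'r::{ring_1, finite} \<Rightarrow> 'm::{ab_group_add, finite} \<Rightarrow> 'm"
    and rm :: "'m \<Rightarrow> 'r \<Rightarrow> 'm"
    and B :: "'m \<Rightarrow> 'm \<Rightarrow> 'r"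
  assumes BB: "B \<in> BLF lm rm"
    and cardD: "card {f::'m \<Rightarrow> 'r. (\<forall>x y. f (x + y) = f x + f y) \<and> (\<forall>y r. f (rm y r) = f y * r)}
                \<le> card (UNIV::'m set)"
  shows "BLF lm rm = {(\<lambda>x y. B (g x) y) | g. g \<in> Aut_left lm}"
proof -
  define D where "D = {f::'m \<Rightarrow> 'r. (\<forall>x y. f (x + y) = f x + f y) \<and> (\<forall>y r. f (rm y r) = f y * r)}"
  have bB: "bilinear_form lm rm B" and nB: "nondegenerate B" using BB by (auto simp: BLF_def)
  have injB: "inj B"
  proof (rule injI)
    fix x x' assume "B x = B x'"
    hence "\<forall>y. B (x - x') y = 0" using bil_diff1[OF bB] by simp
    hence "x - x' = 0" using nB unfolding nondegenerate_def by blast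
    thus "x = x'" by simp
  qed
  have BD: "B ` UNIV \<subseteq> D" using bB unfolding D_def bilinear_form_def by auto
  have finD: "finite D" by simp
  have "card (B ` UNIV) = card (UNIV::'m set)" using injB by (simp add: card_image)
  hence "card (B ` UNIV) = card D" using cardD BD card_mono[OF finD BD] unfolding D_def by simp
  hence rangeB: "B ` UNIV = D" using card_subset_eq[OF finD BD] by simp
  show ?thesis
  proof (intro set_eqI iffI)
    fix B' assume B': "B' \<in> BLF lm rm"
    have bB': "bilinear_form lm rm B'" and nB': "nondegenerate B'" using B' by (auto simp: BLF_def)
    have inD: "B' x \<in> D" for x using bB' unfolding D_def bilinear_form_def by auto
    define g where "g = (\<lambda>x. SOME z. B z = B' x)"
    have Bg: "B (g x) = B' x" for x
    proof -
      have "\<exists>z. B z = B' x" using inD[of x] rangeB by (metis imageE)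
      thus ?thesis unfolding g_def by (rule someI_ex)
    qed
    have gadd: "g (x + x') = g x + g x'" for x x'
    proof -
      have "B (g (x + x')) = B (g x + g x')"
      proof
        fix y
        have "B (g (x + x')) y = B' (x + x') y" by (simp add: Bg)
        also have "\<dots> = B' x y + B' x' y" using bB' unfolding bilinear_form_def by blast
        also have "\<dots> = B (g x) y + B (g x') y" by (simp add: Bg)
        also have "\<dots> = B (g x + g x') y" using bB unfolding bilinear_form_def by metis
        finally show "B (g (x + x')) y = B (g x + g x') y" .
      qed
      thus ?thesis by (rule injD[OF injB])
    qed
    have glm: "g (lm r x) = lm r (g x)" for r x
    proof -
      have "B (g (lm r x)) = B (lm r (g x))"
      proof
        fix y
        have "B (g (lm r x)) y = B' (lm r x) y" by (simp add: Bg)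
        also have "\<dots> = r * B' x y" using bB' unfolding bilinear_form_def by blast
        also have "\<dots> = r * B (g x) y" by (simp add: Bg)
        also have "\<dots> = B (lm r (g x)) y" using bB unfolding bilinear_form_def by metis
        finally show "B (g (lm r x)) y = B (lm r (g x)) y" .
      qed
      thus ?thesis by (rule injD[OF injB])
    qed
    have ginj: "inj g"
    proof (rule injI)
      fix x x' assume "g x = g x'"
      hence "B' x = B' x'" using Bg by metis
      hence "\<forall>y. B' (x - x') y = 0" using bil_diff1[OF bB'] by simp
      hence "x - x' = 0" using nB' unfolding nondegenerate_def by blast
      thus "x = x'" by simp
    qed
    have "bij g" using ginj finite_UNIV_inj_surj[OF _ ginj] by (simp add: bij_def)
    hence "g \<in> Aut_left lm" unfolding Aut_left_def using gadd glm by blast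
    moreover have "B' = (\<lambda>x y. B (g x) y)" using Bg by (intro ext) simp
    ultimately show "B' \<in> {(\<lambda>x y. B (g x) y) | g. g \<in> Aut_left lm}" by blast
  next
    fix B' assume "B' \<in> {(\<lambda>x y. B (g x) y) | g. g \<in> Aut_left lm}"
    then obtain g where g: "g \<in> Aut_left lm" and B'e: "B' = (\<lambda>x y. B (g x) y)" by blast
    have gb: "bij g" and gadd: "\<And>x y. g (x + y) = g x + g y" and glm: "\<And>r x. g (lm r x) = lm r (g x)"
      using g unfolding Aut_left_def by auto
    have g0: "g 0 = 0" using gadd[of 0 0] by simp
    have "bilinear_form lm rm B'" unfolding B'e bilinear_form_def
      using bB unfolding bilinear_form_def by (simp add: gadd glm)
    moreover have "nondegenerate B'" unfolding nondegenerate_def B'e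
    proof (intro conjI allI impI)
      fix x assume "\<forall>y. B (g x) y = 0"
      hence "g x = 0" using nB unfolding nondegenerate_def by blast
      thus "x = 0" using g0 bij_is_inj[OF gb] by (metis injD)
    next
      fix y assume h: "\<forall>x. B (g x) y = 0"
      have "\<forall>z. B z y = 0"
      proof
        fix z obtain x where "z = g x" using bij_is_surj[OF gb] by blast
        thus "B z y = 0" using h by simp
      qed
      thus "y = 0" using nB unfolding nondegenerate_def by blast
    qed
    ultimately show "B' \<in> BLF lm rm" by (simp add: BLF_def)
  qed
qed

lemma part_right:
  fixes lm :: "'r::{ring_1, finite} \<Rightarrow> 'm::{ab_group_add, finite} \<Rightarrow> 'm"
    and rm :: "'m \<Rightarrow> 'r \<Rightarrow> 'm"
    and B :: "'m \<Rightarrow> 'm \<Rightarrow> 'r"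
  assumes BB: "B \<in> BLF lm rm"
    and cardD: "card {f::'m \<Rightarrow> 'r. (\<forall>x y. f (x + y) = f x + f y) \<and> (\<forall>y r. f (lm r y) = r * f y)}
                \<le> card (UNIV::'m set)"
  shows "BLF lm rm = {(\<lambda>x y. B x (h y)) | h. h \<in> Aut_right rm}"
proof -
  define D where "D = {f::'m \<Rightarrow> 'r. (\<forall>x y. f (x + y) = f x + f y) \<and> (\<forall>y r. f (lm r y) = r * f y)}"
  define P where "P = (\<lambda>y x. B x y)"
  have bB: "bilinear_form lm rm B" and nB: "nondegenerate B" using BB by (auto simp: BLF_def)
  have injB: "inj P"
  proof (rule injI)
    fix y y' assume "P y = P y'"
    hence "\<forall>x. B x (y - y') = 0" using bil_diff2[OF bB] unfolding P_def by (metis diff_self)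
    hence "y - y' = 0" using nB unfolding nondegenerate_def by blast
    thus "y = y'" by simp
  qed
  have BD: "P ` UNIV \<subseteq> D" using bB unfolding D_def bilinear_form_def P_def by auto
  have finD: "finite D" by simp
  have "card (P ` UNIV) = card (UNIV::'m set)" using injB by (simp add: card_image)
  hence "card (P ` UNIV) = card D" using cardD BD card_mono[OF finD BD] unfolding D_def by simp
  hence rangeB: "P ` UNIV = D" using card_subset_eq[OF finD BD] by simp
  show ?thesis
  proof (intro set_eqI iffI)
    fix B' assume B': "B' \<in> BLF lm rm"
    have bB': "bilinear_form lm rm B'" and nB': "nondegenerate B'" using B' by (auto simp: BLF_def)
    have inD: "(\<lambda>x. B' x y) \<in> D" for y using bB' unfolding D_def bilinear_form_def by auto
    define h where "h = (\<lambda>y. SOME z. P z = (\<lambda>x. B' x y))"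
    have Ph: "P (h y) = (\<lambda>x. B' x y)" for y
    proof -
      have "\<exists>z. P z = (\<lambda>x. B' x y)" using inD[of y] rangeB by (metis imageE)
      thus ?thesis unfolding h_def by (rule someI_ex)
    qed
    have Bh: "B x (h y) = B' x y" for x y using fun_cong[OF Ph[of y], of x] unfolding P_def .
    have hadd: "h (y + y') = h y + h y'" for y y'
    proof -
      have "P (h (y + y')) = P (h y + h y')"
      proof
        fix x
        have "P (h (y + y')) x = B' x (y + y')" by (simp add: Bh P_def)
        also have "\<dots> = B' x y + B' x y'" using bB' unfolding bilinear_form_def by blast
        also have "\<dots> = B x (h y) + B x (h y')" by (simp add: Bh)
        also have "\<dots> = P (h y + h y') x" using bB unfolding bilinear_form_def P_def by metis
        finally show "P (h (y + y')) x = P (h y + h y') x" .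
      qed
      thus ?thesis by (rule injD[OF injB])
    qed
    have hrm: "h (rm y r) = rm (h y) r" for r y
    proof -
      have "P (h (rm y r)) = P (rm (h y) r)"
      proof
        fix x
        have "P (h (rm y r)) x = B' x (rm y r)" by (simp add: Bh P_def)
        also have "\<dots> = B' x y * r" using bB' unfolding bilinear_form_def by blast
        also have "\<dots> = B x (h y) * r" by (simp add: Bh)
        also have "\<dots> = P (rm (h y) r) x" using bB unfolding bilinear_form_def P_def by metis
        finally show "P (h (rm y r)) x = P (rm (h y) r) x" .
      qed
      thus ?thesis by (rule injD[OF injB])
    qed
    have hinj: "inj h"
    proof (rule injI)
      fix y y' assume "h y = h y'"
      hence "\<forall>x. B' x y = B' x y'" using Bh by metis
      hence "\<forall>x. B' x (y - y') = 0" using bil_diff2[OF bB'] by simp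
      hence "y - y' = 0" using nB' unfolding nondegenerate_def by blast
      thus "y = y'" by simp
    qed
    have "bij h" using hinj finite_UNIV_inj_surj[OF _ hinj] by (simp add: bij_def)
    hence "h \<in> Aut_right rm" unfolding Aut_right_def using hadd hrm by blast
    moreover have "B' = (\<lambda>x y. B x (h y))" using Bh by (intro ext) simp
    ultimately show "B' \<in> {(\<lambda>x y. B x (h y)) | h. h \<in> Aut_right rm}" by blast
  next
    fix B' assume "B' \<in> {(\<lambda>x y. B x (h y)) | h. h \<in> Aut_right rm}"
    then obtain h where h: "h \<in> Aut_right rm" and B'e: "B' = (\<lambda>x y. B x (h y))" by blast
    have hb: "bij h" and hadd: "\<And>x y. h (x + y) = h x + h y" and hrm: "\<And>r x. h (rm x r) = rm (h x) r"
      using h unfolding Aut_right_def by auto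
    have h0: "h 0 = 0" using hadd[of 0 0] by simp
    have "bilinear_form lm rm B'" unfolding B'e bilinear_form_def
      using bB unfolding bilinear_form_def by (simp add: hadd hrm)
    moreover have "nondegenerate B'" unfolding nondegenerate_def B'e
    proof (intro conjI allI impI)
      fix x assume h: "\<forall>y. B x (h y) = 0"
      have "\<forall>z. B x z = 0"
      proof
        fix z obtain y where "z = h y" using bij_is_surj[OF hb] by blast
        thus "B x z = 0" using h by simp
      qed
      thus "x = 0" using nB unfolding nondegenerate_def by blast
    next
      fix y assume "\<forall>x. B x (h y) = 0"
      hence "h y = 0" using nB unfolding nondegenerate_def by blast
      thus "y = 0" using h0 bij_is_inj[OF hb] by (metis injD)
    qed
    ultimately show "B' \<in> BLF lm rm" by (simp add: BLF_def)
  qed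
qed

lemma xring_times: "xring ((*) :: 'r::{ring_1,finite} \<Rightarrow> 'r \<Rightarrow> 'r) 1"
  by unfold_locales (simp_all add: algebra_simps mult.assoc)

lemma xring_op: "xring (\<lambda>a b::'r::{ring_1,finite}. b * a) 1"
  by unfold_locales (simp_all add: algebra_simps mult.assoc)

lemma rid_times: "xring.rid (*) I = right_ideal (I :: 'r::{ring_1,finite} set)"
  by (simp add: xring.rid_def[OF xring_times] right_ideal_def)
lemma maxr_times: "xring.maxr (*) I = maximal_right_ideal (I :: 'r::{ring_1,finite} set)"
  by (simp add: xring.maxr_def[OF xring_times] maximal_right_ideal_def rid_times)
lemma minr_times: "xring.minr (*) I = minimal_right_ideal (I :: 'r::{ring_1,finite} set)"
  by (simp add: xring.minr_def[OF xring_times] minimal_right_ideal_def rid_times)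

lemma rid_op: "xring.rid (\<lambda>a b. b * a) I = left_ideal (I :: 'r::{ring_1,finite} set)"
  by (simp add: xring.rid_def[OF xring_op] left_ideal_def)
lemma maxr_op: "xring.maxr (\<lambda>a b. b * a) I = maximal_left_ideal (I :: 'r::{ring_1,finite} set)"
  by (simp add: xring.maxr_def[OF xring_op] maximal_left_ideal_def rid_op)
lemma minr_op: "xring.minr (\<lambda>a b. b * a) I = minimal_left_ideal (I :: 'r::{ring_1,finite} set)"
  by (simp add: xring.minr_def[OF xring_op] minimal_left_ideal_def rid_op)

lemma dual_right:
  fixes lm :: "'r::{ring_1, finite} \<Rightarrow> 'm::{ab_group_add, finite} \<Rightarrow> 'm"
    and rm :: "'m \<Rightarrow> 'r \<Rightarrow> 'm"
  assumes fr: "frobenius_ring TYPE('r)" and bm: "bimodule lm rm"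
  shows "card {f::'m \<Rightarrow> 'r. (\<forall>x y. f (x + y) = f x + f y) \<and> (\<forall>y r. f (rm y r) = f y * r)}
                \<le> card (UNIV::'m set)"
proof -
  obtain f :: "'r \<Rightarrow> 'r" where f: "\<forall>a b. f (a * b) = f a * b" "range f = right_socle"
      "{a. f a = 0} = jacobson_right"
    using fr unfolding frobenius_ring_def by blast
  define d where "d = f 1"
  have fd: "f a = d * a" for a using f(1) d_def by (metis mult_1)
  have F1: "I \<subseteq> range ((*) d)" if "xring.minr (*) I" for I
  proof -
    have "minimal_right_ideal I" using that minr_times by blast
    hence "I \<subseteq> right_socle" unfolding right_socle_def by blast
    also have "right_socle = range ((*) d)" using f(2) fd by (metis image_cong)
    finally show ?thesis .
  qed
  have F2: "{a. d * a = 0} = \<Inter>{I. xring.maxr (*) I}"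
    using f(3) fd unfolding jacobson_right_def maxr_times by simp
  have "xmod (*) 1 rm d"
  proof (rule xmod.intro[OF xring_times], rule xmod_axioms.intro)
    show "\<And>x y r. rm (x + y) r = rm x r + rm y r" using bm unfolding bimodule_def by simp
    show "\<And>x r t. rm x (r + t) = rm x r + rm x t" using bm unfolding bimodule_def by simp
    show "\<And>x r t. rm x (r * t) = rm (rm x r) t" using bm unfolding bimodule_def by simp
    show "\<And>x. rm x 1 = x" using bm unfolding bimodule_def by simp
    show "\<And>I. xring.minr (*) I \<Longrightarrow> I \<subseteq> range ((*) d)" by (rule F1)
    show "{a. d * a = 0} = \<Inter>{I. xring.maxr (*) I}" by (rule F2)
  qed
  from xmod.dual_UNIV[OF this] show ?thesis .
qed

lemma dual_left:
  fixes lm :: "'r::{ring_1, finite} \<Rightarrow> 'm::{ab_group_add, finite} \<Rightarrow> 'm"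
    and rm :: "'m \<Rightarrow> 'r \<Rightarrow> 'm"
  assumes fr: "frobenius_ring TYPE('r)" and bm: "bimodule lm rm"
  shows "card {f::'m \<Rightarrow> 'r. (\<forall>x y. f (x + y) = f x + f y) \<and> (\<forall>y r. f (lm r y) = r * f y)}
                \<le> card (UNIV::'m set)"
proof -
  obtain f :: "'r \<Rightarrow> 'r" where f: "\<forall>a b. f (a * b) = a * f b" "range f = left_socle"
      "{a. f a = 0} = jacobson_left"
    using fr unfolding frobenius_ring_def by blast
  define d where "d = f 1"
  have fd: "f a = a * d" for a using f(1) d_def by (metis mult_1_right)
  have F1: "I \<subseteq> range ((\<lambda>a b. b * a) d)" if "xring.minr (\<lambda>a b. b * a) I" for I
  proof -
    have "minimal_left_ideal I" using that minr_op by blast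
    hence "I \<subseteq> left_socle" unfolding left_socle_def by blast
    also have "left_socle = range ((\<lambda>a b. b * a) d)" using f(2) fd by (metis image_cong)
    finally show ?thesis .
  qed
  have F2: "{a. (\<lambda>a b. b * a) d a = 0} = \<Inter>{I. xring.maxr (\<lambda>a b. b * a) I}"
    using f(3) fd unfolding jacobson_left_def maxr_op by simp
  have "xmod (\<lambda>a b. b * a) 1 (\<lambda>y r. lm r y) d"
  proof (rule xmod.intro[OF xring_op], rule xmod_axioms.intro)
    show "\<And>x y r. lm r (x + y) = lm r x + lm r y" using bm unfolding bimodule_def by simp
    show "\<And>x r t. lm (r + t) x = lm r x + lm t x" using bm unfolding bimodule_def by simp
    show "\<And>x r t. lm (t * r) x = lm t (lm r x)" using bm unfolding bimodule_def by simp
    show "\<And>x. lm 1 x = x" using bm unfolding bimodule_def by simp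
    show "\<And>I. xring.minr (\<lambda>a b. b * a) I \<Longrightarrow> I \<subseteq> range ((\<lambda>a b. b * a) d)" by (rule F1)
    show "{a. (\<lambda>a b. b * a) d a = 0} = \<Inter>{I. xring.maxr (\<lambda>a b. b * a) I}" by (rule F2)
  qed
  from xmod.dual_UNIV[OF this] show ?thesis by simp
qed

theorem theoremA1:
  fixes lm :: "'r::{ring_1, finite} \<Rightarrow> 'm::{ab_group_add, finite} \<Rightarrow> 'm"
    and rm :: "'m \<Rightarrow> 'r \<Rightarrow> 'm"
    and B :: "'m \<Rightarrow> 'm \<Rightarrow> 'r"
  assumes "frobenius_ring TYPE('r)"
    and "bimodule lm rm"
    and "B \<in> BLF lm rm"
  shows "BLF lm rm = {(\<lambda>x y. B (g x) y) | g. g \<in> Aut_left lm}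
       \<and> BLF lm rm = {(\<lambda>x y. B x (h y)) | h. h \<in> Aut_right rm}"
  using part_left[OF assms(3) dual_right[OF assms(1,2)]] part_right[OF assms(3) dual_left[OF assms(1,2)]]
  by blast

end
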